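(* Let $M$ be an algebraic number field of degree $m$ with ring of integers $\mathbb{Z}_M$ and integral basis $(1,\omega_2,\ldots,\omega_m)$. Let $\alpha$ be an algebraic integer over $M$ of degree $n$ over $M$, let $K=M(\alpha)$, and let $0\neq\mu\in\mathbb{Z}_M$. Define \[ c_{hji}=\tfrac12\left|\alpha^{(hj)}-\alpha^{(hi)}\right|\quad(1\le h\le m,\ 1\le i,j\le n,\ i\ne j), \qquad c_{hi}=\frac{|\mu^{(h)}|}{\prod_{1\le j\le n,\,j\ne i}c_{hji}}\quad(1\le h\le m,\ 1\le i\le n), \] \[ c_1=\max_{h,j,i}\frac{\sqrt[n]{|\mu^{(h)}|}}{c_{hji}}\ \ (\text{max over }1\le h\le m,\ 1\le i,j\le n,\ i\ne j),\qquad c_3=\frac{\sqrt[n]{\overline{|\mu|}}}{\overline{|\alpha|}},\qquad c_4=\max(c_1,c_3), \] \[ c_5=2c_2\,\overline{|\alpha|},\qquad d_{hi}=c_{hi}\,c_5^{\,n-1}\quad(1\le h\le m,\ 1\le i\le n), \] where $c_2$ is the row norm of $S^{-1}$ (the maximum over the rows of $S^{-1}$ of the sum of absolute values of the entries in that row), $S$ being the $m\times m$ matrix whose $j$-th row is $(1,\omega_2^{(j)},\ldots,\omega_m^{(j)})$. Suppose $X,Y\in\mathbb{Z}_M$ satisfy $N_{K/M}(X-\alpha Y)=\mu$ and $\overline{|Y|}>c_4$. Write $X=x_1+\omega_2x_2+\cdots+\omega_mx_m$, $Y=y_1+\omega_2y_2+\cdots+\omega_my_m$ with $x_i,y_i\in\mathbb{Z}$,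 put $A=\max(\max_i|x_i|,\max_i|y_i|)$ and $\beta=X-\alpha Y$. Then there exist indices $h,i$ with $1\le h\le m$, $1\le i\le n$ such that \[ |\beta^{(hi)}|\le d_{hi}\,A^{1-n}. \]
   Context: Let $\sigma_1,\ldots,\sigma_m$ be the embeddings of $M$ into $\mathbb{C}$; for $\gamma\in M$ write $\gamma^{(j)}=\sigma_j(\gamma)$. Let $f(x)$ be the monic relative defining polynomial of $\alpha$ over $M$, and for $j=1,\ldots,m$ let $\alpha^{(j1)},\ldots,\alpha^{(jn)}$ be the roots of the polynomial obtained by applying $\sigma_j$ to the coefficients of $f$. For $\gamma\in K$, $\gamma^{(jk)}$ denotes the image of $\gamma$ under the embedding of $K$ into $\mathbb{C}$ extending $\sigma_j$ and sending $\alpha$ to $\alpha^{(jk)}$; thus $\beta^{(hi)}=X^{(h)}-\alpha^{(hi)}Y^{(h)}$. For an algebraic number $\gamma$, its size $\overline{|\gamma|}$ is the maximum of the absolute values of its conjugates; in particular $\overline{|\alpha|}=\max_{j,k}|\alpha^{(jk)}|$, $\overline{|Y|}=\max_j|Y^{(j)}|$, $\overline{|\mu|}=\max_j|\mu^{(j)}|$. It is assumed that the $\alpha^{(hj)}$, $1\le j\le n$, are pairwise distinct for each $h$ (as they are, $f$ being irreducible over $M$), so that all $c_{hji}>0$. *)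

theory Defs
  imports "HOL-Analysis.Analysis" "HOL-Computational_Algebra.Polynomial"
begin

definition subfield_C :: "complex set \<Rightarrow> bool" where
  "subfield_C M \<longleftrightarrow> 0 \<in> M \<and> 1 \<in> M \<and>
     (\<forall>a\<in>M. \<forall>b\<in>M. a + b \<in> M \<and> a - b \<in> M \<and> a * b \<in> M) \<and>
     (\<forall>a\<in>M. inverse a \<in> M)"

definition ring_of_integers :: "complex set \<Rightarrow> complex set" where
  "ring_of_integers M = {\<gamma> \<in> M. algebraic_int \<gamma>}"

definition integral_basis :: "complex set \<Rightarrow> nat \<Rightarrow> (nat \<Rightarrow> complex) \<Rightarrow> bool" where
  "integral_basis M m \<omega> \<longleftrightarrow>
     \<omega> 1 = 1 \<and>
     M = {(\<Sum>k=1..m. of_rat (q k) * \<omega> k) | q. True} \<and>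
     ring_of_integers M = {(\<Sum>k=1..m. of_int (x k) * \<omega> k) | x. True} \<and>
     (\<forall>q. (\<Sum>k=1..m. of_rat (q k) * \<omega> k) = 0 \<longrightarrow> (\<forall>k\<in>{1..m}. q k = 0))"

text \<open>Field embeddings of M into the complex numbers (behaviour outside M irrelevant).\<close>
definition field_emb :: "complex set \<Rightarrow> (complex \<Rightarrow> complex) \<Rightarrow> bool" where
  "field_emb M s \<longleftrightarrow> s 1 = 1 \<and>
     (\<forall>a\<in>M. \<forall>b\<in>M. s (a + b) = s a + s b \<and> s (a * b) = s a * s b)"

definition all_embeddings :: "complex set \<Rightarrow> nat \<Rightarrow> (nat \<Rightarrow> complex \<Rightarrow> complex) \<Rightarrow> bool" where
  "all_embeddings M m \<sigma> \<longleftrightarrow>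
     (\<forall>j\<in>{1..m}. field_emb M (\<sigma> j)) \<and>
     (\<forall>j\<in>{1..m}. \<forall>k\<in>{1..m}. j \<noteq> k \<longrightarrow> (\<exists>a\<in>M. \<sigma> j a \<noteq> \<sigma> k a)) \<and>
     (\<forall>s. field_emb M s \<longrightarrow> (\<exists>j\<in>{1..m}. \<forall>a\<in>M. s a = \<sigma> j a))"

definition poly_over :: "complex set \<Rightarrow> complex poly \<Rightarrow> bool" where
  "poly_over M p \<longleftrightarrow> (\<forall>i. coeff p i \<in> M)"

definition irreducible_over :: "complex set \<Rightarrow> complex poly \<Rightarrow> bool" where
  "irreducible_over M f \<longleftrightarrow> poly_over M f \<and> degree f \<ge> 1 \<and>
     (\<forall>g h. poly_over M g \<longrightarrow> poly_over M h \<longrightarrow> f = g * h \<longrightarrow> degree g = 0 \<or> degree h = 0)"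

text \<open>Relative norm N_{K/M}(X - alpha Y), where f is the minimal polynomial of alpha
  over M: the product of X - rho Y over the conjugates rho of alpha over M (roots of f,
  counted with multiplicity).\<close>
definition rel_norm_lin :: "complex poly \<Rightarrow> complex \<Rightarrow> complex \<Rightarrow> complex" where
  "rel_norm_lin f X Y = (\<Prod>\<rho>\<in>{\<rho>. poly f \<rho> = 0}. (X - \<rho> * Y) ^ order \<rho> f)"

definition house_M :: "nat \<Rightarrow> (nat \<Rightarrow> complex \<Rightarrow> complex) \<Rightarrow> complex \<Rightarrow> real" where
  "house_M m \<sigma> \<gamma> = Max ((\<lambda>j. cmod (\<sigma> j \<gamma>)) ` {1..m})"

end

theory Submission
  imports Defs "HOL-Computational_Algebra.Fundamental_Theorem_Algebra"
begin

lemma sf_basic: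
  assumes "subfield_C M"
  shows sf0: "0 \<in> M" and sf1: "1 \<in> M"
    and sf_add: "a \<in> M \<Longrightarrow> b \<in> M \<Longrightarrow> a + b \<in> M"
    and sf_diff: "a \<in> M \<Longrightarrow> b \<in> M \<Longrightarrow> a - b \<in> M"
    and sf_mult: "a \<in> M \<Longrightarrow> b \<in> M \<Longrightarrow> a * b \<in> M"
    and sf_inv: "a \<in> M \<Longrightarrow> inverse a \<in> M"
  using assms unfolding subfield_C_def by auto

lemma sf_uminus: "subfield_C M \<Longrightarrow> a \<in> M \<Longrightarrow> - a \<in> M"
  using sf_diff[of M 0 a] sf0[of M] by simp

lemma sf_div: "subfield_C M \<Longrightarrow> a \<in> M \<Longrightarrow> b \<in> M \<Longrightarrow> a / b \<in> M"
  by (simp add: divide_inverse sf_mult sf_inv)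

lemma sf_of_nat: "subfield_C M \<Longrightarrow> of_nat k \<in> M"
  by (induction k) (auto simp: sf0 sf1 sf_add)

lemma sf_of_int: "subfield_C M \<Longrightarrow> of_int z \<in> M"
proof (cases "z \<ge> 0")
  case True
  assume M: "subfield_C M"
  then show ?thesis using True sf_of_nat[OF M, of "nat z"] by simp
next
  case False
  assume M: "subfield_C M"
  have "of_int z = - (of_nat (nat (-z)) :: complex)" using False by simp
  then show ?thesis using sf_uminus[OF M sf_of_nat[OF M]] by simp
qed

lemma sf_Ints: "subfield_C M \<Longrightarrow> a \<in> \<int> \<Longrightarrow> a \<in> M"
  by (auto elim!: Ints_cases simp: sf_of_int)

lemma sf_sum: "subfield_C M \<Longrightarrow> (\<And>x. x \<in> A \<Longrightarrow> g x \<in> M) \<Longrightarrow> sum g A \<in> M"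
  by (induction A rule: infinite_finite_induct) (auto simp: sf0 sf_add)

lemma sf_prod: "subfield_C M \<Longrightarrow> (\<And>x. x \<in> A \<Longrightarrow> g x \<in> M) \<Longrightarrow> prod g A \<in> M"
  by (induction A rule: infinite_finite_induct) (auto simp: sf1 sf_mult)

lemma sf_power: "subfield_C M \<Longrightarrow> a \<in> M \<Longrightarrow> a ^ k \<in> M"
  by (induction k) (auto simp: sf1 sf_mult)

lemma sf_of_rat: "subfield_C M \<Longrightarrow> of_rat q \<in> M"
proof -
  assume M: "subfield_C M"
  obtain a b where "q = Fract a b" "b > 0" by (cases q) auto
  then have "of_rat q = (of_int a / of_int b :: complex)" by (simp add: of_rat_rat)
  then show ?thesis using sf_div[OF M sf_of_int[OF M] sf_of_int[OF M]] by simp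
qed

lemma emb_basic:
  assumes M: "subfield_C M" and s: "field_emb M s"
  shows emb1: "s 1 = 1"
    and emb_add: "a \<in> M \<Longrightarrow> b \<in> M \<Longrightarrow> s (a + b) = s a + s b"
    and emb_mult: "a \<in> M \<Longrightarrow> b \<in> M \<Longrightarrow> s (a * b) = s a * s b"
  using s unfolding field_emb_def by auto

lemma emb0: assumes M: "subfield_C M" and s: "field_emb M s" shows "s 0 = 0"
  using emb_add[OF M s sf0[OF M] sf0[OF M]] by simp

lemma emb_uminus: assumes M: "subfield_C M" and s: "field_emb M s" and a: "a \<in> M"
  shows "s (- a) = - s a"
  using emb_add[OF M s a sf_uminus[OF M a]] emb0[OF M s] by (simp add: eq_neg_iff_add_eq_0 add.commute)

lemma emb_diff: assumes M: "subfield_C M" and s: "field_emb M s" and a: "a \<in> M" and b: "b \<in> M"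
  shows "s (a - b) = s a - s b"
  using emb_add[OF M s a sf_uminus[OF M b]] emb_uminus[OF M s b] by simp

lemma emb_of_nat: assumes M: "subfield_C M" and s: "field_emb M s" shows "s (of_nat k) = of_nat k"
proof (induction k)
  case 0 then show ?case using emb0[OF M s] by simp
next
  case (Suc k)
  have "s (of_nat (Suc k)) = s (1 + of_nat k)" by simp
  also have "\<dots> = 1 + of_nat k" using emb_add[OF M s sf1[OF M] sf_of_nat[OF M]] emb1[OF M s] Suc by simp
  finally show ?case by simp
qed

lemma emb_of_int: assumes M: "subfield_C M" and s: "field_emb M s" shows "s (of_int z) = of_int z"
proof (cases "z \<ge> 0")
  case True
  then show ?thesis using emb_of_nat[OF M s, of "nat z"] by simp
next
  case False
  have "of_int z = - (of_nat (nat (-z)) :: complex)" using False by simp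
  then show ?thesis using emb_uminus[OF M s sf_of_nat[OF M]] emb_of_nat[OF M s] by simp
qed

lemma emb_sum: assumes M: "subfield_C M" and s: "field_emb M s"
  shows "(\<And>x. x \<in> A \<Longrightarrow> g x \<in> M) \<Longrightarrow> s (sum g A) = (\<Sum>x\<in>A. s (g x))"
  by (induction A rule: infinite_finite_induct) (auto simp: emb0[OF M s] emb_add[OF M s] sf_sum[OF M])

lemma emb_prod: assumes M: "subfield_C M" and s: "field_emb M s"
  shows "(\<And>x. x \<in> A \<Longrightarrow> g x \<in> M) \<Longrightarrow> s (prod g A) = (\<Prod>x\<in>A. s (g x))"
  by (induction A rule: infinite_finite_induct) (auto simp: emb1[OF M s] emb_mult[OF M s] sf_prod[OF M])

lemma emb_power: assumes M: "subfield_C M" and s: "field_emb M s" and a: "a \<in> M"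
  shows "s (a ^ k) = s a ^ k"
  by (induction k) (auto simp: emb1[OF M s] emb_mult[OF M s] sf_power[OF M] a)

lemma emb_nz: assumes M: "subfield_C M" and s: "field_emb M s" and a: "a \<in> M" and nz: "a \<noteq> 0"
  shows "s a \<noteq> 0"
proof
  assume "s a = 0"
  have "s (a * inverse a) = s a * s (inverse a)" using emb_mult[OF M s a sf_inv[OF M a]] .
  then show False using nz \<open>s a = 0\<close> emb1[OF M s] by simp
qed

definition sring :: "complex set \<Rightarrow> bool" where
  "sring R \<longleftrightarrow> 0 \<in> R \<and> 1 \<in> R \<and> (\<forall>a\<in>R. \<forall>b\<in>R. a + b \<in> R \<and> a - b \<in> R \<and> a * b \<in> R)"

lemma sring_M: "subfield_C M \<Longrightarrow> sring M"
  unfolding sring_def subfield_C_def by auto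

lemma sring_Ints: "sring \<int>"
  unfolding sring_def by auto

lemma sr_basic:
  assumes "sring R"
  shows sr0: "0 \<in> R" and sr1: "1 \<in> R"
    and sr_add: "a \<in> R \<Longrightarrow> b \<in> R \<Longrightarrow> a + b \<in> R"
    and sr_diff: "a \<in> R \<Longrightarrow> b \<in> R \<Longrightarrow> a - b \<in> R"
    and sr_mult: "a \<in> R \<Longrightarrow> b \<in> R \<Longrightarrow> a * b \<in> R"
  using assms unfolding sring_def by auto

lemma sr_uminus: "sring R \<Longrightarrow> a \<in> R \<Longrightarrow> - a \<in> R"
  using sr_diff[of R 0 a] sr0[of R] by simp

lemma sr_of_nat: "sring R \<Longrightarrow> of_nat k \<in> R"
  by (induction k) (auto simp: sr0 sr1 sr_add)

lemma sr_sum: "sring R \<Longrightarrow> (\<And>x. x \<in> A \<Longrightarrow> g x \<in> R) \<Longrightarrow> sum g A \<in> R"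
  by (induction A rule: infinite_finite_induct) (auto simp: sr0 sr_add)

lemma po_0: "sring R \<Longrightarrow> poly_over R 0"
  by (simp add: poly_over_def sr0)

lemma po_const: "sring R \<Longrightarrow> c \<in> R \<Longrightarrow> poly_over R [:c:]"
  by (auto simp: poly_over_def sr0 coeff_pCons split: nat.splits)

lemma po_1: "sring R \<Longrightarrow> poly_over R 1"
  using po_const[of R 1] sr1[of R] by (simp add: one_pCons)

lemma po_monom: "sring R \<Longrightarrow> c \<in> R \<Longrightarrow> poly_over R (monom c k)"
  by (auto simp: poly_over_def sr0 coeff_monom)

lemma po_pCons: "sring R \<Longrightarrow> c \<in> R \<Longrightarrow> poly_over R p \<Longrightarrow> poly_over R (pCons c p)"
  by (auto simp: poly_over_def coeff_pCons split: nat.splits)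

lemma po_add: "sring R \<Longrightarrow> poly_over R p \<Longrightarrow> poly_over R q \<Longrightarrow> poly_over R (p + q)"
  by (auto simp: poly_over_def sr_add)

lemma po_diff: "sring R \<Longrightarrow> poly_over R p \<Longrightarrow> poly_over R q \<Longrightarrow> poly_over R (p - q)"
  by (auto simp: poly_over_def sr_diff)

lemma po_uminus: "sring R \<Longrightarrow> poly_over R p \<Longrightarrow> poly_over R (- p)"
  by (auto simp: poly_over_def sr_uminus)

lemma po_mult: "sring R \<Longrightarrow> poly_over R p \<Longrightarrow> poly_over R q \<Longrightarrow> poly_over R (p * q)"
  unfolding poly_over_def coeff_mult by (auto intro!: sr_sum sr_mult)

lemma po_smult: "sring R \<Longrightarrow> c \<in> R \<Longrightarrow> poly_over R p \<Longrightarrow> poly_over R (smult c p)"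
  by (auto simp: poly_over_def sr_mult)

lemma po_pderiv: "sring R \<Longrightarrow> poly_over R p \<Longrightarrow> poly_over R (pderiv p)"
proof -
  assume R: "sring R" and p: "poly_over R p"
  have "of_nat (Suc n) \<in> R" for n using sr_of_nat[OF R, of "Suc n"] by simp
  then show ?thesis using p R unfolding poly_over_def coeff_pderiv by (auto intro!: sr_mult)
qed

lemma po_sum: "sring R \<Longrightarrow> (\<And>x. x \<in> A \<Longrightarrow> poly_over R (g x)) \<Longrightarrow> poly_over R (sum g A)"
  by (induction A rule: infinite_finite_induct) (auto simp: po_0 po_add)

lemma po_coeff: "poly_over R p \<Longrightarrow> coeff p i \<in> R"
  by (simp add: poly_over_def)

lemma po_lead_inv: "subfield_C M \<Longrightarrow> poly_over M p \<Longrightarrow> inverse (lead_coeff p) \<in> M"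
  by (simp add: po_coeff sf_inv)

lemma poly_div_exists:
  assumes R: "sring R" and q: "poly_over R q" "q \<noteq> 0" and qi: "inverse (lead_coeff q) \<in> R"
  shows "poly_over R p \<Longrightarrow> \<exists>d r. poly_over R d \<and> poly_over R r \<and> p = d * q + r \<and> (r = 0 \<or> degree r < degree q)"
proof (induction "degree p" arbitrary: p rule: less_induct)
  case (less p)
  show ?case
  proof (cases "p = 0 \<or> degree p < degree q")
    case True
    then show ?thesis using less.prems po_0[OF R] by (intro exI[of _ 0] exI[of _ p]) auto
  next
    case False
    then have p0: "p \<noteq> 0" and dg: "degree q \<le> degree p" by auto
    define c where "c = lead_coeff p * inverse (lead_coeff q)"
    define t where "t = monom c (degree p - degree q)"
    have lq: "lead_coeff q \<noteq> 0" using q by simp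
    have c0: "c \<noteq> 0" using p0 lq by (simp add: c_def)
    have cR: "c \<in> R" unfolding c_def using less.prems qi by (intro sr_mult[OF R] po_coeff)
    have tR: "poly_over R t" unfolding t_def using po_monom[OF R cR] .
    have t0: "t \<noteq> 0" using c0 by (simp add: t_def)
    have dt: "degree (t * q) = degree p"
      using t0 q dg by (simp add: degree_mult_eq t_def degree_monom_eq c0)
    have lt: "coeff (t * q) (degree p) = lead_coeff p"
    proof -
      have "coeff (t * q) (degree t + degree q) = lead_coeff t * lead_coeff q"
        by (rule coeff_mult_degree_sum)
      moreover have "degree t + degree q = degree p" using dg c0 by (simp add: t_def degree_monom_eq)
      moreover have "lead_coeff t = c" using c0 by (simp add: t_def degree_monom_eq)
      ultimately show ?thesis using lq by (simp add: c_def)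
    qed
    define p' where "p' = p - t * q"
    have p'R: "poly_over R p'" unfolding p'_def using less.prems tR q
      by (intro po_diff[OF R] po_mult[OF R])
    have dp': "p' = 0 \<or> degree p' < degree p"
    proof (rule ccontr)
      assume "\<not> ?thesis"
      then have nz: "p' \<noteq> 0" and ge: "degree p' \<ge> degree p" by auto
      have "degree p' \<le> degree p" unfolding p'_def using dt
        by (metis degree_diff_le le_refl)
      then have "degree p' = degree p" using ge by simp
      moreover have "coeff p' (degree p) = 0" unfolding p'_def using lt by simp
      ultimately show False using nz by (metis leading_coeff_0_iff)
    qed
    show ?thesis
    proof (cases "p' = 0")
      case True
      then show ?thesis using tR po_0[OF R] unfolding p'_def by (intro exI[of _ t] exI[of _ 0]) auto
    next
      case False
      with dp' have "degree p' < degree p" by simp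
      from less.hyps[OF this p'R] obtain d r where dr: "poly_over R d" "poly_over R r" "p' = d * q + r"
        "r = 0 \<or> degree r < degree q" by blast
      have "p = (d + t) * q + r" using dr(3) unfolding p'_def by (simp add: algebra_simps)
      then show ?thesis using dr po_add[OF R dr(1) tR] by blast
    qed
  qed
qed

lemma mp_coeff: "subfield_C M \<Longrightarrow> field_emb M s \<Longrightarrow> coeff (map_poly s p) i = s (coeff p i)"
  by (simp add: coeff_map_poly emb0)

lemma mp_add: assumes M: "subfield_C M" and s: "field_emb M s" and p: "poly_over M p" and q: "poly_over M q"
  shows "map_poly s (p + q) = map_poly s p + map_poly s q"
  by (rule poly_eqI) (simp add: mp_coeff[OF M s] emb_add[OF M s] po_coeff[OF p] po_coeff[OF q])

lemma mp_diff: assumes M: "subfield_C M" and s: "field_emb M s" and p: "poly_over M p" and q: "poly_over M q"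
  shows "map_poly s (p - q) = map_poly s p - map_poly s q"
  by (rule poly_eqI) (simp add: mp_coeff[OF M s] emb_diff[OF M s] po_coeff[OF p] po_coeff[OF q])

lemma mp_mult: assumes M: "subfield_C M" and s: "field_emb M s" and p: "poly_over M p" and q: "poly_over M q"
  shows "map_poly s (p * q) = map_poly s p * map_poly s q"
proof (rule poly_eqI)
  fix n
  have "coeff (map_poly s (p * q)) n = s (\<Sum>i\<le>n. coeff p i * coeff q (n-i))"
    by (simp add: mp_coeff[OF M s] coeff_mult)
  also have "\<dots> = (\<Sum>i\<le>n. s (coeff p i * coeff q (n-i)))"
    by (rule emb_sum[OF M s]) (intro sf_mult[OF M] po_coeff[OF p] po_coeff[OF q])
  also have "\<dots> = (\<Sum>i\<le>n. s (coeff p i) * s (coeff q (n-i)))"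
    by (simp add: emb_mult[OF M s] po_coeff[OF p] po_coeff[OF q])
  finally show "coeff (map_poly s (p * q)) n = coeff (map_poly s p * map_poly s q) n"
    by (simp add: coeff_mult mp_coeff[OF M s])
qed

lemma mp_1: assumes M: "subfield_C M" and s: "field_emb M s" shows "map_poly s 1 = 1"
  by (simp add: emb1[OF M s])

lemma mp_smult: assumes M: "subfield_C M" and s: "field_emb M s" and p: "poly_over M p" and c: "c \<in> M"
  shows "map_poly s (smult c p) = smult (s c) (map_poly s p)"
  by (rule poly_eqI) (simp add: mp_coeff[OF M s] emb_mult[OF M s] po_coeff[OF p] c)

lemma mp_monom: assumes M: "subfield_C M" and s: "field_emb M s"
  shows "map_poly s (monom c k) = monom (s c) k"
  by (rule poly_eqI) (simp add: mp_coeff[OF M s] coeff_monom emb0[OF M s])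

lemma mp_pderiv: assumes M: "subfield_C M" and s: "field_emb M s" and p: "poly_over M p"
  shows "map_poly s (pderiv p) = pderiv (map_poly s p)"
  by (rule poly_eqI) (simp add: mp_coeff[OF M s] coeff_pderiv emb_mult[OF M s] sf_of_nat[OF M]
      po_coeff[OF p] emb_of_nat[OF M s] del: of_nat_Suc)


lemma bezout_over:
  assumes M: "subfield_C M" and irr: "irreducible_over M f" and p: "poly_over M p"
    and nd: "\<not> f dvd p"
  shows "\<exists>a b. poly_over M a \<and> poly_over M b \<and> a * f + b * p = 1"
proof -
  have R: "sring M" using sring_M[OF M] .
  have fM: "poly_over M f" and fdeg: "degree f \<ge> 1" using irr by (auto simp: irreducible_over_def)
  then have f0: "f \<noteq> 0" by auto
  define I where "I = {a * f + b * p | a b. poly_over M a \<and> poly_over M b}"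
  have fI: "f \<in> I" unfolding I_def using po_1[OF R] po_0[OF R] by (intro CollectI exI[of _ 1] exI[of _ 0]) auto
  have pI: "p \<in> I" unfolding I_def using po_1[OF R] po_0[OF R] by (intro CollectI exI[of _ 0] exI[of _ 1]) auto
  have ex: "\<exists>k u. u \<in> I \<and> u \<noteq> 0 \<and> degree u = k" using fI f0 by blast
  define k where "k = (LEAST k. \<exists>u. u \<in> I \<and> u \<noteq> 0 \<and> degree u = k)"
  obtain u where u: "u \<in> I" "u \<noteq> 0" "degree u = k"
    using LeastI_ex[OF ex] unfolding k_def by blast
  have umin: "degree u \<le> degree v" if "v \<in> I" "v \<noteq> 0" for v
  proof -
    have "\<exists>u. u \<in> I \<and> u \<noteq> 0 \<and> degree u = degree v" using that by blast
    then have "k \<le> degree v" unfolding k_def by (rule Least_le)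
    then show ?thesis using u(3) by simp
  qed
  obtain a0 b0 where ab0: "poly_over M a0" "poly_over M b0" "u = a0 * f + b0 * p"
    using u(1) unfolding I_def by blast
  have uM: "poly_over M u" unfolding ab0(3) using po_add[OF R po_mult[OF R ab0(1) fM] po_mult[OF R ab0(2) p]] .
  have ui: "inverse (lead_coeff u) \<in> M" using po_lead_inv[OF M uM] .
  have divides: "\<exists>d. poly_over M d \<and> w = d * u" if wI: "w \<in> I" and wM: "poly_over M w" for w
  proof -
    obtain d r where dr: "poly_over M d" "poly_over M r" "w = d * u + r" "r = 0 \<or> degree r < degree u"
      using poly_div_exists[OF R uM u(2) ui wM] by blast
    obtain a1 b1 where ab1: "poly_over M a1" "poly_over M b1" "w = a1 * f + b1 * p"
      using wI unfolding I_def by blast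
    have "r = w - d * u" using dr(3) by simp
    also have "\<dots> = (a1 * f + b1 * p) - d * (a0 * f + b0 * p)" using ab1(3) ab0(3) by simp
    also have "\<dots> = (a1 - d * a0) * f + (b1 - d * b0) * p" by (simp add: algebra_simps)
    finally have "r = (a1 - d * a0) * f + (b1 - d * b0) * p" .
    moreover have "poly_over M (a1 - d * a0)" "poly_over M (b1 - d * b0)"
      using po_diff[OF R ab1(1) po_mult[OF R dr(1) ab0(1)]] po_diff[OF R ab1(2) po_mult[OF R dr(1) ab0(2)]] by auto
    ultimately have "r \<in> I" unfolding I_def by blast
    have "r = 0"
    proof (rule ccontr)
      assume "r \<noteq> 0"
      then have "degree u \<le> degree r" using umin \<open>r \<in> I\<close> by blast
      then show False using dr(4) \<open>r \<noteq> 0\<close> by simp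
    qed
    then show ?thesis using dr by auto
  qed
  obtain d where d0: "poly_over M d \<and> f = d * u" using divides[OF fI fM] by (rule exE)
  obtain d' where d'0: "poly_over M d' \<and> p = d' * u" using divides[OF pI p] by (rule exE)
  note d = conjunct1[OF d0] conjunct2[OF d0]
  note d' = conjunct1[OF d'0] conjunct2[OF d'0]
  have irrA: "\<forall>g h. poly_over M g \<longrightarrow> poly_over M h \<longrightarrow> f = g * h \<longrightarrow> degree g = 0 \<or> degree h = 0"
    using irr[unfolded irreducible_over_def, THEN conjunct2, THEN conjunct2] .
  have "degree d = 0 \<or> degree u = 0" using irrA[rule_format, OF d(1) uM d(2)] .
  then show ?thesis
  proof
    assume "degree d = 0"
    then obtain c where c: "d = [:c:]" by (meson degree_eq_zeroE)
    have fc: "f = smult c u" using d(2) c by simp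
    then have "c \<noteq> 0" using f0 by auto
    then have "u = smult (inverse c) f" using fc by simp
    then have "f dvd u" by (simp add: dvd_smult)
    moreover have "u dvd p" using d'(2) by simp
    ultimately have "f dvd p" by (rule dvd_trans)
    then show ?thesis using nd by simp
  next
    assume "degree u = 0"
    then obtain e where e: "u = [:e:]" by (meson degree_eq_zeroE)
    then have e0: "e \<noteq> 0" using u by auto
    have eM: "e \<in> M" using uM e po_coeff[of M u 0] by simp
    have "smult (inverse e) a0 * f + smult (inverse e) b0 * p = smult (inverse e) u"
      using ab0(3) by (simp add: smult_add_right)
    also have "\<dots> = 1" using e e0 by (simp add: one_pCons)
    finally show ?thesis using ab0 po_smult[OF R sf_inv[OF M eM]]
      by (intro exI[of _ "smult (inverse e) a0"] exI[of _ "smult (inverse e) b0"]) auto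
  qed
qed


lemma min_poly_dvd:
  assumes M: "subfield_C M" and irr: "irreducible_over M f" and p: "poly_over M p"
    and fa: "poly f a = 0" and pa: "poly p a = 0"
  shows "f dvd p"
proof (rule ccontr)
  assume "\<not> f dvd p"
  then obtain u v where "u * f + v * p = 1" using bezout_over[OF M irr p] by blast
  then have "poly (u * f + v * p) a = 1" by simp
  then show False using fa pa by simp
qed

lemma min_poly_quot:
  assumes M: "subfield_C M" and irr: "irreducible_over M f" and p: "poly_over M p"
    and fa: "poly f a = 0" and pa: "poly p a = 0" and inv: "inverse (lead_coeff f) \<in> M"
  shows "\<exists>d. poly_over M d \<and> p = d * f"
proof -
  have R: "sring M" using sring_M[OF M] .
  have fM: "poly_over M f" and f0: "f \<noteq> 0" using irr by (auto simp: irreducible_over_def)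
  obtain d r where dr: "poly_over M d" "poly_over M r" "p = d * f + r" "r = 0 \<or> degree r < degree f"
    using poly_div_exists[OF R fM f0 inv p] by blast
  have "poly r a = 0" using dr(3) fa pa by (simp add: algebra_simps)
  then have "r = 0 \<or> f dvd r" using min_poly_dvd[OF M irr dr(2) fa] by blast
  have "r = 0"
  proof (rule ccontr)
    assume "r \<noteq> 0"
    then have "f dvd r" using \<open>r = 0 \<or> f dvd r\<close> by simp
    then have "degree f \<le> degree r" using \<open>r \<noteq> 0\<close> by (rule dvd_imp_degree_le)
    then show False using dr(4) \<open>r \<noteq> 0\<close> by simp
  qed
  then show ?thesis using dr by auto
qed

lemma pderiv_double_root:
  fixes L T :: "complex poly"
  assumes "poly L z = 0"
  shows "poly (pderiv (L * (L * T))) z = 0"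
  using assms by (simp add: pderiv_mult)

lemma roots_distinct:
  fixes n :: nat
  assumes M: "subfield_C M" and irr: "irreducible_over M f" and s: "field_emb M s"
    and fs: "map_poly s f = (\<Prod>k=1..n. [:- r k, 1:])"
    and ij: "i \<in> {1..n}" "j \<in> {1..n}" "i \<noteq> j"
  shows "r i \<noteq> r j"
proof
  assume eq: "r i = r j"
  have R: "sring M" using sring_M[OF M] .
  have fM: "poly_over M f" and fdeg: "degree f \<ge> 1" using irr by (auto simp: irreducible_over_def)
  have f'M: "poly_over M (pderiv f)" using po_pderiv[OF R fM] .
  have f'0: "pderiv f \<noteq> 0" using fdeg by (simp add: pderiv_eq_0_iff)
  have "\<not> f dvd pderiv f"
  proof
    assume "f dvd pderiv f"
    then have "degree f \<le> degree (pderiv f)" using f'0 by (rule dvd_imp_degree_le)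
    then show False using fdeg by (simp add: degree_pderiv)
  qed
  then obtain a b where ab: "poly_over M a" "poly_over M b" "a * f + b * pderiv f = 1"
    using bezout_over[OF M irr f'M] by blast
  have "map_poly s (a * f + b * pderiv f) = 1" using ab(3) mp_1[OF M s] by simp
  then have eq1: "map_poly s a * map_poly s f + map_poly s b * pderiv (map_poly s f) = 1"
    by (simp add: mp_add[OF M s po_mult[OF R ab(1) fM] po_mult[OF R ab(2) f'M]]
        mp_mult[OF M s ab(1) fM] mp_mult[OF M s ab(2) f'M] mp_pderiv[OF M s fM])
  define L where "L k = [:- r k, 1:]" for k
  define T where "T = (\<Prod>k\<in>{1..n} - {i} - {j}. L k)"
  have "(\<Prod>k=1..n. L k) = L i * (\<Prod>k\<in>{1..n} - {i}. L k)"
    using prod.remove[of "{1..n}" i L] ij by simp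
  also have "(\<Prod>k\<in>{1..n} - {i}. L k) = L j * T"
    unfolding T_def using ij by (subst prod.remove[of _ j]) auto
  finally have fsplit: "map_poly s f = L i * (L i * T)" using fs eq by (simp add: L_def)
  have Lz: "poly (L i) (r i) = 0" by (simp add: L_def)
  have "poly (map_poly s f) (r i) = 0" using fsplit Lz by simp
  moreover have "poly (pderiv (map_poly s f)) (r i) = 0"
    unfolding fsplit by (rule pderiv_double_root[OF Lz])
  ultimately have "poly (map_poly s a * map_poly s f + map_poly s b * pderiv (map_poly s f)) (r i) = 0"
    by simp
  then show False using eq1 by simp
qed

lemma hom_eval:
  fixes p :: "complex poly"
  assumes b: "b \<noteq> 0" and dp: "degree p \<le> n"
  shows "(\<Sum>i\<le>n. coeff p i * a ^ i * b ^ (n - i)) = b ^ n * poly p (a / b)"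
proof -
  have "poly p (a / b) = (\<Sum>i\<le>n. coeff p i * (a / b) ^ i)"
    unfolding poly_altdef
    by (rule sum.mono_neutral_left) (use dp in \<open>auto simp: coeff_eq_0\<close>)
  then have "b ^ n * poly p (a / b) = (\<Sum>i\<le>n. coeff p i * (b ^ n * (a / b) ^ i))"
    by (simp add: sum_distrib_left mult_ac)
  also have "\<dots> = (\<Sum>i\<le>n. coeff p i * a ^ i * b ^ (n - i))"
  proof (rule sum.cong[OF refl])
    fix i assume "i \<in> {..n}"
    then have "b ^ n = b ^ i * b ^ (n - i)" by (simp flip: power_add)
    then show "coeff p i * (b ^ n * (a / b) ^ i) = coeff p i * a ^ i * b ^ (n - i)"
      using b by (simp add: power_divide field_simps)
  qed
  finally show ?thesis by simp
qed

lemma prod_linear_eval: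
  fixes n :: nat and a b :: complex and r :: "nat \<Rightarrow> complex"
  assumes b: "b \<noteq> 0"
  shows "b ^ n * poly (\<Prod>k=1..n. [:- r k, 1:]) (a / b) = (\<Prod>k=1..n. (a - r k * b))"
proof -
  have "b ^ n = (\<Prod>k=1..n. b)" by simp
  then have "b ^ n * poly (\<Prod>k=1..n. [:- r k, 1:]) (a / b) = (\<Prod>k=1..n. b * (- r k + a / b))"
    by (simp add: poly_prod prod.distrib)
  also have "\<dots> = (\<Prod>k=1..n. (a - r k * b))"
  proof (rule prod.cong[OF refl])
    fix k
    have "b * (- r k + a / b) = b * (a / b) - r k * b" by (simp add: algebra_simps)
    also have "b * (a / b) = a" using b by simp
    finally show "b * (- r k + a / b) = a - r k * b" .
  qed
  finally show ?thesis .
qed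

lemma norm_hom:
  fixes f :: "complex poly"
  assumes mon: "lead_coeff f = 1" and Y: "Y \<noteq> 0"
  shows "rel_norm_lin f X Y = Y ^ degree f * poly f (X / Y)"
proof -
  define Z where "Z = {\<rho>. poly f \<rho> = 0}"
  have f0: "f \<noteq> 0" using mon by auto
  have dec: "(\<Prod>z\<in>Z. [:-z, 1:] ^ order z f) = f"
    using complex_poly_decompose[of f] mon by (simp add: Z_def)
  have "degree f = (\<Sum>z\<in>Z. degree ([:-z, 1:] ^ order z f))"
    by (subst dec[symmetric], rule degree_prod_sum_eq) auto
  then have deg: "degree f = (\<Sum>z\<in>Z. order z f)" by (simp add: degree_linear_power)
  have "Y ^ degree f * poly f (X / Y) = (\<Prod>z\<in>Z. Y ^ order z f) * (\<Prod>z\<in>Z. (X / Y - z) ^ order z f)"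
    by (subst (2) dec[symmetric]) (simp add: deg power_sum poly_prod)
  also have "\<dots> = (\<Prod>z\<in>Z. (Y * (X / Y - z)) ^ order z f)"
    by (simp add: prod.distrib power_mult_distrib)
  also have "\<dots> = (\<Prod>z\<in>Z. (X - z * Y) ^ order z f)"
  proof (rule prod.cong[OF refl])
    fix z
    have "Y * (X / Y - z) = X - z * Y" using Y by (simp add: right_diff_distrib)
    then show "(Y * (X / Y - z)) ^ order z f = (X - z * Y) ^ order z f" by simp
  qed
  finally show ?thesis by (simp add: rel_norm_lin_def Z_def)
qed

lemma lagrange_bound:
  fixes z :: "nat \<Rightarrow> complex" and n :: nat
  assumes dist: "\<And>i j. i \<in> {1..n} \<Longrightarrow> j \<in> {1..n} \<Longrightarrow> i \<noteq> j \<Longrightarrow> z i \<noteq> z j"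
  shows "\<exists>C\<ge>0. \<forall>P. degree P < n \<longrightarrow> (\<forall>l. cmod (coeff P l) \<le> C * (\<Sum>k=1..n. cmod (poly P (z k))))"
proof -
  define L where "L k = smult (inverse (\<Prod>i\<in>{1..n}-{k}. (z k - z i))) (\<Prod>i\<in>{1..n}-{k}. [:- z i, 1:])" for k
  have degL: "degree (L k) \<le> n - 1" if k: "k \<in> {1..n}" for k
  proof -
    have "degree (L k) \<le> degree (\<Prod>i\<in>{1..n}-{k}. [:- z i, 1:])" unfolding L_def by (rule degree_smult_le)
    also have "\<dots> \<le> (\<Sum>i\<in>{1..n}-{k}. degree [:- z i, 1:])"
      using degree_prod_sum_le[of "{1..n}-{k}" "\<lambda>i. [:- z i, 1:]"] by (simp add: o_def)
    also have "\<dots> = n - 1" using k by simp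
    finally show ?thesis .
  qed
  have polyL: "poly (L k) (z i) = (if i = k then 1 else 0)" if k: "k \<in> {1..n}" and i: "i \<in> {1..n}" for k i
  proof (cases "i = k")
    case True
    have "(\<Prod>i\<in>{1..n}-{k}. (z k - z i)) \<noteq> 0"
      using dist k by (subst prod_zero_iff) auto
    then show ?thesis using True by (simp add: L_def poly_prod)
  next
    case False
    then have "(\<Prod>j\<in>{1..n}-{k}. poly [:- z j, 1:] (z i)) = 0"
      using i by (subst prod_zero_iff) auto
    then show ?thesis using False by (simp add: L_def poly_prod)
  qed
  define C where "C = (\<Sum>k=1..n. \<Sum>l<n. cmod (coeff (L k) l))"
  have C0: "C \<ge> 0" unfolding C_def by (intro sum_nonneg) auto
  have main: "cmod (coeff P l) \<le> C * (\<Sum>k=1..n. cmod (poly P (z k)))" if dP: "degree P < n" for P l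
  proof -
    define Q where "Q = P - (\<Sum>k=1..n. smult (poly P (z k)) (L k))"
    have n1: "n \<ge> 1" using dP by simp
    have "degree Q \<le> n - 1" unfolding Q_def
    proof (rule degree_diff_le)
      show "degree P \<le> n - 1" using dP by simp
      show "degree (\<Sum>k = 1..n. smult (poly P (z k)) (L k)) \<le> n - 1"
      proof (rule degree_sum_le)
        fix k assume "k \<in> {1..n}"
        then show "degree (smult (poly P (z k)) (L k)) \<le> n - 1"
          using order.trans[OF degree_smult_le degL] by blast
      qed simp
    qed
    then have dQ: "degree Q < n" using n1 by simp
    have rootsQ: "poly Q (z i) = 0" if i: "i \<in> {1..n}" for i
    proof -
      have "(\<Sum>k=1..n. poly P (z k) * poly (L k) (z i)) = (\<Sum>k=1..n. if k = i then poly P (z k) else 0)"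
        using i by (intro sum.cong) (auto simp: polyL)
      also have "\<dots> = poly P (z i)" using i by (simp add: sum.delta)
      finally show ?thesis by (simp add: Q_def poly_sum)
    qed
    have Q0: "Q = 0"
    proof (rule ccontr)
      assume "Q \<noteq> 0"
      then have fin: "finite {x. poly Q x = 0}" and cb: "card {x. poly Q x = 0} \<le> degree Q"
        using poly_roots_finite card_poly_roots_bound by auto
      have "z ` {1..n} \<subseteq> {x. poly Q x = 0}" using rootsQ by auto
      then have "card (z ` {1..n}) \<le> card {x. poly Q x = 0}" using fin by (rule card_mono[rotated])
      moreover have "card (z ` {1..n}) = n"
      proof -
        have "inj_on z {1..n}" unfolding inj_on_def using dist by blast
        then show ?thesis by (simp add: card_image)
      qed
      ultimately show False using cb dQ by simp
    qed
    then have Peq: "P = (\<Sum>k=1..n. smult (poly P (z k)) (L k))" unfolding Q_def by simp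
    show ?thesis
    proof (cases "l < n")
      case False
      then have "coeff P l = 0" using dP by (intro coeff_eq_0) simp
      then show ?thesis using C0 by (simp add: sum_nonneg)
    next
      case True
      have "coeff P l = (\<Sum>k=1..n. poly P (z k) * coeff (L k) l)"
        by (subst Peq) (simp add: coeff_sum)
      then have "cmod (coeff P l) \<le> (\<Sum>k=1..n. cmod (poly P (z k) * coeff (L k) l))"
        by (simp add: norm_sum)
      also have "\<dots> \<le> (\<Sum>k=1..n. cmod (poly P (z k)) * C)"
      proof (rule sum_mono)
        fix k assume k: "k \<in> {1..n}"
        have "cmod (coeff (L k) l) \<le> (\<Sum>l<n. cmod (coeff (L k) l))"
          using True by (intro member_le_sum) auto
        also have "\<dots> \<le> C" unfolding C_def using k
          by (intro member_le_sum[of k "{1..n}" "\<lambda>k. \<Sum>l<n. cmod (coeff (L k) l)"]) (auto intro: sum_nonneg)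
        finally show "cmod (poly P (z k) * coeff (L k) l) \<le> cmod (poly P (z k)) * C"
          by (simp add: norm_mult mult_left_mono)
      qed
      also have "\<dots> = C * (\<Sum>k=1..n. cmod (poly P (z k)))" by (simp add: sum_distrib_left mult_ac)
      finally show ?thesis .
    qed
  qed
  show ?thesis using C0 main by blast
qed

lemma omega_in_M:
  assumes basis: "integral_basis M m \<omega>" and k: "k \<in> {1..m}"
  shows "\<omega> k \<in> M"
proof -
  define q where "q l = (if l = k then 1 else 0 :: rat)" for l
  have "(\<Sum>l=1..m. of_rat (q l) * \<omega> l) = (\<Sum>l=1..m. if l = k then \<omega> l else 0)"
    by (intro sum.cong) (auto simp: q_def)
  also have "\<dots> = \<omega> k" using k by (simp add: sum.delta)
  finally have "\<omega> k = (\<Sum>l=1..m. of_rat (q l) * \<omega> l)" by simp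
  then show ?thesis using basis unfolding integral_basis_def by blast
qed

lemma emb_intcomb:
  fixes m :: nat and w :: "nat \<Rightarrow> int"
  assumes M: "subfield_C M" and s: "field_emb M s" and om: "\<And>k. k \<in> {1..m} \<Longrightarrow> \<omega> k \<in> M"
  shows "s (\<Sum>k=1..m. of_int (w k) * \<omega> k) = (\<Sum>k=1..m. of_int (w k) * s (\<omega> k))"
proof -
  have "s (\<Sum>k=1..m. of_int (w k) * \<omega> k) = (\<Sum>k=1..m. s (of_int (w k) * \<omega> k))"
    by (rule emb_sum[OF M s]) (simp add: sf_mult[OF M] sf_of_int[OF M] om)
  also have "\<dots> = (\<Sum>k=1..m. of_int (w k) * s (\<omega> k))"
    by (intro sum.cong refl) (simp add: emb_mult[OF M s] sf_of_int[OF M] om emb_of_int[OF M s])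
  finally show ?thesis .
qed

lemma intcomb_in_M:
  fixes m :: nat and w :: "nat \<Rightarrow> int"
  assumes M: "subfield_C M" and om: "\<And>k. k \<in> {1..m} \<Longrightarrow> \<omega> k \<in> M"
  shows "(\<Sum>k=1..m. of_int (w k) * \<omega> k) \<in> M"
  by (rule sf_sum[OF M]) (simp add: sf_mult[OF M] sf_of_int[OF M] om)

lemma coord_formula:
  fixes m :: nat and w :: "nat \<Rightarrow> int"
  assumes M: "subfield_C M" and s: "\<And>j. j \<in> {1..m} \<Longrightarrow> field_emb M (\<sigma> j)"
    and om: "\<And>k. k \<in> {1..m} \<Longrightarrow> \<omega> k \<in> M"
    and Sinv_left: "\<And>i k. i \<in> {1..m} \<Longrightarrow> k \<in> {1..m} \<Longrightarrow>
          (\<Sum>j=1..m. Sinv i j * \<sigma> j (\<omega> k)) = (if i = k then 1 else 0)"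
    and i: "i \<in> {1..m}"
  shows "(\<Sum>j=1..m. Sinv i j * \<sigma> j (\<Sum>k=1..m. of_int (w k) * \<omega> k)) = of_int (w i)"
proof -
  have "(\<Sum>j=1..m. Sinv i j * \<sigma> j (\<Sum>k=1..m. of_int (w k) * \<omega> k))
      = (\<Sum>j=1..m. Sinv i j * (\<Sum>k=1..m. of_int (w k) * \<sigma> j (\<omega> k)))"
  proof (rule sum.cong[OF refl])
    fix j assume j: "j \<in> {1..m}"
    show "Sinv i j * \<sigma> j (\<Sum>k=1..m. of_int (w k) * \<omega> k) = Sinv i j * (\<Sum>k=1..m. of_int (w k) * \<sigma> j (\<omega> k))"
      using emb_intcomb[of M "\<sigma> j" m \<omega> w, OF M s[OF j] om] by simp
  qed
  also have "\<dots> = (\<Sum>j=1..m. \<Sum>k=1..m. Sinv i j * (of_int (w k) * \<sigma> j (\<omega> k)))"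
    by (simp add: sum_distrib_left)
  also have "\<dots> = (\<Sum>k=1..m. \<Sum>j=1..m. Sinv i j * (of_int (w k) * \<sigma> j (\<omega> k)))"
    by (rule sum.swap)
  also have "\<dots> = (\<Sum>k=1..m. of_int (w k) * (\<Sum>j=1..m. Sinv i j * \<sigma> j (\<omega> k)))"
    by (simp add: sum_distrib_left mult.left_commute)
  also have "\<dots> = (\<Sum>k=1..m. if k = i then of_int (w k) else 0)"
  proof (rule sum.cong[OF refl])
    fix k assume k: "k \<in> {1..m}"
    show "of_int (w k) * (\<Sum>j=1..m. Sinv i j * \<sigma> j (\<omega> k)) = (if k = i then of_int (w k) else 0)"
      using Sinv_left[OF i k] by auto
  qed
  also have "\<dots> = of_int (w i)" using i by (simp add: sum.delta)
  finally show ?thesis .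
qed

lemma coord_bound:
  fixes m :: nat and Sinv :: "nat \<Rightarrow> nat \<Rightarrow> complex"
  assumes "\<And>j. j \<in> {1..m} \<Longrightarrow> cmod (v j) \<le> B"
  shows "cmod (\<Sum>j=1..m. Sinv i j * v j) \<le> (\<Sum>j=1..m. cmod (Sinv i j)) * B"
proof -
  have "cmod (\<Sum>j=1..m. Sinv i j * v j) \<le> (\<Sum>j=1..m. cmod (Sinv i j) * cmod (v j))"
    by (rule order.trans[OF norm_sum]) (simp add: norm_mult)
  also have "\<dots> \<le> (\<Sum>j=1..m. cmod (Sinv i j) * B)"
    using assms by (intro sum_mono mult_left_mono) auto
  finally show ?thesis by (simp add: sum_distrib_right)
qed

lemma poly_prod_root:
  fixes r :: "nat \<Rightarrow> complex" and n :: nat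
  assumes "k \<in> {1..n}"
  shows "poly (\<Prod>k'=1..n. [:- r k', 1:]) (r k) = 0"
  using assms by (simp add: poly_prod prod_zero_iff) (metis atLeastAtMost_iff)

lemma poly_sum_lessThan:
  fixes p :: "complex poly"
  assumes "\<And>i. i \<ge> D \<Longrightarrow> coeff p i = 0"
  shows "poly p x = (\<Sum>i<D. coeff p i * x ^ i)"
proof (cases "p = 0")
  case True then show ?thesis by simp
next
  case False
  then have "coeff p (degree p) \<noteq> 0" by simp
  then have "degree p < D" using assms by (meson not_le)
  then show ?thesis unfolding poly_altdef
    by (intro sum.mono_neutral_left) (auto simp: coeff_eq_0)
qed

lemma rat_common_denom:
  fixes Q :: "nat \<Rightarrow> nat \<Rightarrow> nat \<Rightarrow> rat" and D n m :: nat
  shows "\<exists>\<Delta>::int. \<Delta> > 0 \<and> (\<forall>i<D. \<forall>l<n. \<forall>k\<in>{1..m}. \<exists>w::int. of_int \<Delta> * Q i l k = of_int w)"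
proof -
  define den where "den i l k = snd (quotient_of (Q i l k))" for i l k
  define \<Delta> where "\<Delta> = (\<Prod>i<D. \<Prod>l<n. \<Prod>k\<in>{1..m}. den i l k)"
  have pos: "\<Delta> > 0" unfolding \<Delta>_def den_def by (intro prod_pos) (auto intro: quotient_of_denom_pos')
  have "\<exists>w::int. of_int \<Delta> * Q i l k = of_int w" if i: "i < D" and l: "l < n" and k: "k \<in> {1..m}" for i l k
  proof -
    have "den i l k dvd (\<Prod>k\<in>{1..m}. den i l k)" using k by (intro dvd_prodI) auto
    also have "\<dots> dvd (\<Prod>l<n. \<Prod>k\<in>{1..m}. den i l k)" using l by (intro dvd_prodI[of _ l]) auto
    also have "\<dots> dvd \<Delta>" unfolding \<Delta>_def using i by (intro dvd_prodI[of _ i]) auto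
    finally obtain c where c: "\<Delta> = den i l k * c" by (elim dvdE)
    obtain a b where ab: "quotient_of (Q i l k) = (a, b)" by (cases "quotient_of (Q i l k)")
    have b0: "b > 0" using quotient_of_denom_pos[OF ab] .
    have Qeq: "Q i l k = of_int a / of_int b" using quotient_of_div[OF ab] .
    have "den i l k = b" using ab by (simp add: den_def)
    then have "of_int \<Delta> * Q i l k = of_int (a * c)" using c Qeq b0 by simp
    then show ?thesis by blast
  qed
  then show ?thesis using pos by blast
qed

lemma alpha_house_ge1:
  fixes m n :: nat and r :: "nat \<Rightarrow> nat \<Rightarrow> complex" and \<sigma> :: "nat \<Rightarrow> complex \<Rightarrow> complex"
    and Sinv :: "nat \<Rightarrow> nat \<Rightarrow> complex" and f :: "complex poly"
  assumes M: "subfield_C M" and basis: "integral_basis M m \<omega>"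
    and emb: "\<And>j. j \<in> {1..m} \<Longrightarrow> field_emb M (\<sigma> j)"
    and irr: "irreducible_over M f" and mon: "lead_coeff f = 1" and deg: "degree f = n" and n2: "n \<ge> 2"
    and root: "poly f \<alpha> = 0" and aint: "algebraic_int \<alpha>"
    and roots: "\<And>j. j \<in> {1..m} \<Longrightarrow> map_poly (\<sigma> j) f = (\<Prod>k=1..n. [:- r j k, 1:])"
    and Sinv_left: "\<And>i k. i \<in> {1..m} \<Longrightarrow> k \<in> {1..m} \<Longrightarrow>
          (\<Sum>j=1..m. Sinv i j * \<sigma> j (\<omega> k)) = (if i = k then 1 else 0)"
    and m1: "m \<ge> 1"
  shows "\<exists>j\<in>{1..m}. \<exists>k\<in>{1..n}. cmod (r j k) \<ge> 1"
proof (rule ccontr)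
  assume "\<not> ?thesis"
  then have small: "cmod (r j k) < 1" if "j \<in> {1..m}" "k \<in> {1..n}" for j k using that by force
  have R: "sring M" using sring_M[OF M] .
  have fM: "poly_over M f" and f0: "f \<noteq> 0" using irr by (auto simp: irreducible_over_def)
  have finv: "inverse (lead_coeff f) \<in> M" using mon sf1[OF M] by simp
  have om: "\<And>k. k \<in> {1..m} \<Longrightarrow> \<omega> k \<in> M" using omega_in_M[OF basis] .
  define q where "q = Max ((\<lambda>(j,k). cmod (r j k)) ` ({1..m} \<times> {1..n}))"
  have fin: "finite ((\<lambda>(j,k). cmod (r j k)) ` ({1..m} \<times> {1..n}))" by simp
  have ne: "((\<lambda>(j,k). cmod (r j k)) ` ({1..m} \<times> {1..n})) \<noteq> {}" using m1 n2 by auto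
  have rq: "cmod (r j k) \<le> q" if "j \<in> {1..m}" "k \<in> {1..n}" for j k
    unfolding q_def using that by (intro Max_ge[OF fin]) force
  have q1: "q < 1" using Max_in[OF fin ne] small unfolding q_def by auto
  have "cmod (r 1 1) \<le> q" using rq[of 1 1] m1 n2 by auto
  then have q0: "q \<ge> 0" using norm_ge_zero[of "r 1 1"] by linarith
  obtain g where g: "lead_coeff g = 1" "\<forall>i. coeff g i \<in> \<int>" "poly g \<alpha> = 0"
    using aint by (auto elim: algebraic_int.cases)
  define D where "D = degree g"
  have gZ: "poly_over \<int> g" using g by (simp add: poly_over_def)
  have g0: "g \<noteq> 0" using g by auto
  have "\<forall>i. \<exists>Rp. poly_over M Rp \<and> degree Rp < n \<and> poly Rp \<alpha> = \<alpha> ^ i"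
  proof
    fix i
    obtain d rr where dr: "poly_over M d" "poly_over M rr" "monom 1 i = d * f + rr" "rr = 0 \<or> degree rr < degree f"
      using poly_div_exists[OF R fM f0 finv po_monom[OF R sf1[OF M]]] by blast
    have "poly rr \<alpha> = \<alpha> ^ i" using arg_cong[OF dr(3), of "\<lambda>p. poly p \<alpha>"] root by (simp add: poly_monom)
    moreover have "degree rr < n" using dr(4) deg n2 by auto
    ultimately show "\<exists>Rp. poly_over M Rp \<and> degree Rp < n \<and> poly Rp \<alpha> = \<alpha> ^ i" using dr(2) by blast
  qed
  then obtain Rf where Rf: "\<And>i. poly_over M (Rf i)" "\<And>i. degree (Rf i) < n" "\<And>i. poly (Rf i) \<alpha> = \<alpha> ^ i"
    by metis
  have "\<forall>N. \<exists>B. poly_over \<int> B \<and> (\<forall>i\<ge>D. coeff B i = 0) \<and> poly B \<alpha> = \<alpha> ^ N"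
  proof
    fix N
    obtain d rr where dr: "poly_over \<int> d" "poly_over \<int> rr" "monom 1 N = d * g + rr" "rr = 0 \<or> degree rr < degree g"
    proof -
      have "inverse (lead_coeff g) \<in> \<int>" using g(1) by simp
      moreover have "(1::complex) \<in> \<int>" by simp
      ultimately show ?thesis using poly_div_exists[OF sring_Ints gZ g0 _ po_monom[OF sring_Ints], of 1 N] that by blast
    qed
    have "poly rr \<alpha> = \<alpha> ^ N" using arg_cong[OF dr(3), of "\<lambda>p. poly p \<alpha>"] g(3) by (simp add: poly_monom)
    moreover have "\<forall>i\<ge>D. coeff rr i = 0" using dr(4) unfolding D_def by (auto intro: coeff_eq_0)
    ultimately show "\<exists>B. poly_over \<int> B \<and> (\<forall>i\<ge>D. coeff B i = 0) \<and> poly B \<alpha> = \<alpha> ^ N" using dr(2) by blast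
  qed
  then obtain Bf where Bf: "\<And>N. poly_over \<int> (Bf N)" "\<And>N i. i \<ge> D \<Longrightarrow> coeff (Bf N) i = 0"
      "\<And>N. poly (Bf N) \<alpha> = \<alpha> ^ N"
    by metis
  have "\<forall>N i. \<exists>z::int. coeff (Bf N) i = of_int z" using Bf(1) unfolding poly_over_def by (metis Ints_cases)
  then obtain bI where bI: "\<And>N i. coeff (Bf N) i = of_int (bI N i)" by metis
  define P where "P N = (\<Sum>i<D. smult (coeff (Bf N) i) (Rf i))" for N
  have PM: "poly_over M (P N)" for N
    unfolding P_def using Bf(1) by (intro po_sum[OF R] po_smult[OF R] Rf(1) sf_Ints[OF M]) (auto simp: poly_over_def)
  have Pdeg: "degree (P N) < n" for N
  proof -
    have "degree (P N) \<le> n - 1" unfolding P_def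
    proof (rule degree_sum_le)
      fix i show "degree (smult (coeff (Bf N) i) (Rf i)) \<le> n - 1"
        using degree_smult_le[of "coeff (Bf N) i" "Rf i"] Rf(2)[of i] by linarith
    qed simp
    then show ?thesis using n2 by simp
  qed
  have Pval: "poly (P N) \<alpha> = \<alpha> ^ N" for N
  proof -
    have "poly (P N) \<alpha> = (\<Sum>i<D. coeff (Bf N) i * \<alpha> ^ i)" unfolding P_def by (simp add: poly_sum Rf(3))
    also have "\<dots> = poly (Bf N) \<alpha>" by (rule poly_sum_lessThan[symmetric]) (rule Bf(2))
    finally show ?thesis using Bf(3) by simp
  qed
  have Pcoeff: "coeff (P N) l = (\<Sum>i<D. of_int (bI N i) * coeff (Rf i) l)" for N l
    unfolding P_def by (simp add: coeff_sum bI)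
  have Proots: "poly (map_poly (\<sigma> j) (P N)) (r j k) = r j k ^ N" if j: "j \<in> {1..m}" and k: "k \<in> {1..n}" for j k N
  proof -
    have xM: "poly_over M (monom 1 N - P N)" using po_diff[OF R po_monom[OF R sf1[OF M]] PM] .
    have "poly (monom 1 N - P N) \<alpha> = 0" using Pval by (simp add: poly_monom)
    then obtain e where e: "poly_over M e" "monom 1 N - P N = e * f"
      using min_poly_quot[OF M irr xM root _ finv] by blast
    have "map_poly (\<sigma> j) (monom 1 N - P N) = map_poly (\<sigma> j) e * map_poly (\<sigma> j) f"
      using e mp_mult[OF M emb[OF j] e(1) fM] by simp
    moreover have "map_poly (\<sigma> j) (monom 1 N - P N) = monom 1 N - map_poly (\<sigma> j) (P N)"
      using mp_diff[OF M emb[OF j] po_monom[OF R sf1[OF M]] PM] mp_monom[OF M emb[OF j]] emb1[OF M emb[OF j]] by simp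
    moreover have "poly (map_poly (\<sigma> j) f) (r j k) = 0" using roots[OF j] poly_prod_root[OF k] by simp
    ultimately have "poly (monom 1 N - map_poly (\<sigma> j) (P N)) (r j k) = 0" by simp
    then show ?thesis by (simp add: poly_monom)
  qed
  have "\<forall>j. \<exists>C. j \<in> {1..m} \<longrightarrow> C \<ge> 0 \<and> (\<forall>Q. degree Q < n \<longrightarrow> (\<forall>l. cmod (coeff Q l) \<le> C * (\<Sum>k=1..n. cmod (poly Q (r j k)))))"
  proof
    fix j
    show "\<exists>C. j \<in> {1..m} \<longrightarrow> C \<ge> 0 \<and> (\<forall>Q. degree Q < n \<longrightarrow> (\<forall>l. cmod (coeff Q l) \<le> C * (\<Sum>k=1..n. cmod (poly Q (r j k)))))"
    proof (cases "j \<in> {1..m}")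
      case True
      have "r j i \<noteq> r j i'" if "i \<in> {1..n}" "i' \<in> {1..n}" "i \<noteq> i'" for i i'
        using roots_distinct[OF M irr emb[OF True] roots[OF True] that] .
      then show ?thesis using lagrange_bound[of n "r j"] by blast
    qed auto
  qed
  then obtain Cf where Cf: "\<And>j. j \<in> {1..m} \<Longrightarrow> Cf j \<ge> 0"
    "\<And>j Q l. j \<in> {1..m} \<Longrightarrow> degree Q < n \<Longrightarrow> cmod (coeff Q l) \<le> Cf j * (\<Sum>k=1..n. cmod (poly Q (r j k)))"
    by metis
  define Cm where "Cm = (\<Sum>j=1..m. Cf j)"
  have CfCm: "Cf j \<le> Cm" if "j \<in> {1..m}" for j
    unfolding Cm_def using that Cf(1) by (intro member_le_sum) auto
  have Cm0: "Cm \<ge> 0" unfolding Cm_def using Cf(1) by (intro sum_nonneg) auto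
  have bound1: "cmod (\<sigma> j (coeff (P N) l)) \<le> Cm * (n * q ^ N)" if j: "j \<in> {1..m}" for j N l
  proof -
    have "degree (map_poly (\<sigma> j) (P N)) < n" using Pdeg order.strict_trans1[OF map_poly_degree_leq] by blast
    then have "cmod (coeff (map_poly (\<sigma> j) (P N)) l) \<le> Cf j * (\<Sum>k=1..n. cmod (poly (map_poly (\<sigma> j) (P N)) (r j k)))"
      using Cf(2)[OF j] by blast
    also have "(\<Sum>k=1..n. cmod (poly (map_poly (\<sigma> j) (P N)) (r j k))) = (\<Sum>k=1..n. cmod (r j k) ^ N)"
      by (intro sum.cong refl) (simp add: Proots[OF j] norm_power)
    also have "\<dots> \<le> (\<Sum>k=1..n. q ^ N)"
      using rq[OF j] by (intro sum_mono power_mono) auto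
    also have "\<dots> = n * q ^ N" by simp
    finally have "cmod (coeff (map_poly (\<sigma> j) (P N)) l) \<le> Cf j * (n * q ^ N)"
      using Cf(1)[OF j] by (simp add: mult_left_mono)
    also have "\<dots> \<le> Cm * (n * q ^ N)" using CfCm[OF j] q0 by (intro mult_right_mono) auto
    finally show ?thesis by (simp add: mp_coeff[OF M emb[OF j]])
  qed
  have "\<forall>il. \<exists>qv. coeff (Rf (fst il)) (snd il) = (\<Sum>k=1..m. of_rat (qv k) * \<omega> k)"
  proof
    fix il
    have "coeff (Rf (fst il)) (snd il) \<in> M" using Rf(1) by (simp add: po_coeff)
    moreover have Meq: "M = {(\<Sum>k=1..m. of_rat (q k) * \<omega> k) | q. True}"
      using basis[unfolded integral_basis_def, THEN conjunct2, THEN conjunct1] .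
    ultimately have "coeff (Rf (fst il)) (snd il) \<in> {(\<Sum>k=1..m. of_rat (q k) * \<omega> k) | q. True}"
      by simp
    then show "\<exists>qv. coeff (Rf (fst il)) (snd il) = (\<Sum>k=1..m. of_rat (qv k) * \<omega> k)"
      by simp
  qed
  then obtain Qf where Qf: "\<And>il. coeff (Rf (fst il)) (snd il) = (\<Sum>k=1..m. of_rat (Qf il k) * \<omega> k)"
    by metis
  define Qr where "Qr i l k = Qf (i, l) k" for i l k
  have Qr: "coeff (Rf i) l = (\<Sum>k=1..m. of_rat (Qr i l k) * \<omega> k)" for i l
    using Qf[of "(i, l)"] by (simp add: Qr_def)
  obtain \<Delta> :: int where \<Delta>: "\<Delta> > 0" "\<forall>i<D. \<forall>l<n. \<forall>k\<in>{1..m}. \<exists>w::int. of_int \<Delta> * Qr i l k = of_int w"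
    using rat_common_denom[of D n m Qr] by blast
  have "\<forall>i l k. \<exists>w::int. (i < D \<and> l < n \<and> k \<in> {1..m}) \<longrightarrow> of_int \<Delta> * Qr i l k = of_int w"
    using \<Delta>(2) by blast
  then obtain Wf where Wf: "\<And>i l k. i < D \<Longrightarrow> l < n \<Longrightarrow> k \<in> {1..m} \<Longrightarrow> of_int \<Delta> * Qr i l k = of_int (Wf i l k)"
    by metis
  have WfC: "(of_int \<Delta> :: complex) * of_rat (Qr i l k) = of_int (Wf i l k)"
    if "i < D" "l < n" "k \<in> {1..m}" for i l k
  proof -
    have "(of_rat (of_int \<Delta> * Qr i l k) :: complex) = of_rat (of_int (Wf i l k))" using Wf[OF that] by simp
    then show ?thesis by (simp add: of_rat_mult)
  qed
  have intcoords: "of_int \<Delta> * coeff (P N) l = (\<Sum>k=1..m. of_int (\<Sum>i<D. bI N i * Wf i l k) * \<omega> k)"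
    if l: "l < n" for N l
  proof -
    have "of_int \<Delta> * coeff (P N) l = (\<Sum>i<D. of_int (bI N i) * (of_int \<Delta> * coeff (Rf i) l))"
      by (simp add: Pcoeff sum_distrib_left mult_ac)
    also have "\<dots> = (\<Sum>i<D. of_int (bI N i) * (\<Sum>k=1..m. of_int (Wf i l k) * \<omega> k))"
    proof (rule sum.cong[OF refl])
      fix i assume i: "i \<in> {..<D}"
      have "of_int \<Delta> * coeff (Rf i) l = (\<Sum>k=1..m. (of_int \<Delta> * of_rat (Qr i l k)) * \<omega> k)"
        by (simp add: Qr sum_distrib_left mult_ac)
      also have "\<dots> = (\<Sum>k=1..m. of_int (Wf i l k) * \<omega> k)"
        using i l by (intro sum.cong refl) (simp add: WfC)
      finally show "of_int (bI N i) * (of_int \<Delta> * coeff (Rf i) l) = of_int (bI N i) * (\<Sum>k=1..m. of_int (Wf i l k) * \<omega> k)"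
        by simp
    qed
    also have "\<dots> = (\<Sum>i<D. \<Sum>k=1..m. of_int (bI N i) * of_int (Wf i l k) * \<omega> k)"
      by (simp add: sum_distrib_left mult_ac)
    also have "\<dots> = (\<Sum>k=1..m. \<Sum>i<D. of_int (bI N i) * of_int (Wf i l k) * \<omega> k)"
      by (rule sum.swap)
    also have "\<dots> = (\<Sum>k=1..m. of_int (\<Sum>i<D. bI N i * Wf i l k) * \<omega> k)"
      by (simp add: sum_distrib_right)
    finally show ?thesis .
  qed
  define S2 where "S2 = (\<Sum>t=1..m. \<Sum>j=1..m. cmod (Sinv t j))"
  have S2ge: "(\<Sum>j=1..m. cmod (Sinv t j)) \<le> S2" if "t \<in> {1..m}" for t
    unfolding S2_def using that by (intro member_le_sum) (auto intro: sum_nonneg)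
  have S20: "S2 \<ge> 0" unfolding S2_def by (intro sum_nonneg) auto
  define K where "K = S2 * (of_int \<Delta> * (Cm * n))"
  have K0: "K \<ge> 0" unfolding K_def using S20 \<Delta>(1) Cm0 by simp
  obtain N where N: "q ^ N < 1 / (K + 1)" using real_arch_pow_inv[of "1 / (K + 1)" q] K0 q1 by auto
  have qN0: "q ^ N \<ge> 0" using q0 by simp
  have KN: "K * q ^ N < 1"
  proof -
    have "(K + 1) * q ^ N < 1" using N K0 by (simp add: field_simps)
    then show ?thesis using qN0 by (simp add: algebra_simps)
  qed
  have coeff0: "coeff (P N) l = 0" if l: "l < n" for l
  proof -
    define w where "w k = (\<Sum>i<D. bI N i * Wf i l k)" for k
    have cM: "coeff (P N) l \<in> M" using PM by (simp add: po_coeff)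
    have w0: "w t = 0" if t: "t \<in> {1..m}" for t
    proof -
      have "of_int (w t) = (\<Sum>j=1..m. Sinv t j * \<sigma> j (\<Sum>k=1..m. of_int (w k) * \<omega> k))"
        using coord_formula[OF M emb om Sinv_left t] by simp
      also have "\<dots> = (\<Sum>j=1..m. Sinv t j * (of_int \<Delta> * \<sigma> j (coeff (P N) l)))"
      proof (rule sum.cong[OF refl])
        fix j assume j: "j \<in> {1..m}"
        have "\<sigma> j (\<Sum>k=1..m. of_int (w k) * \<omega> k) = \<sigma> j (of_int \<Delta> * coeff (P N) l)"
          using intcoords[OF l, of N] by (simp add: w_def)
        also have "\<dots> = of_int \<Delta> * \<sigma> j (coeff (P N) l)"
          using emb_mult[OF M emb[OF j] sf_of_int[OF M] cM] emb_of_int[OF M emb[OF j]] by simp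
        finally show "Sinv t j * \<sigma> j (\<Sum>k=1..m. of_int (w k) * \<omega> k) = Sinv t j * (of_int \<Delta> * \<sigma> j (coeff (P N) l))"
          by simp
      qed
      finally have eqw: "of_int (w t) = (\<Sum>j=1..m. Sinv t j * (of_int \<Delta> * \<sigma> j (coeff (P N) l)))" .
      have "cmod (of_int (w t)) \<le> (\<Sum>j=1..m. cmod (Sinv t j)) * (of_int \<Delta> * (Cm * (n * q ^ N)))"
        unfolding eqw
      proof (rule coord_bound)
        fix j assume j: "j \<in> {1..m}"
        show "cmod (of_int \<Delta> * \<sigma> j (coeff (P N) l)) \<le> of_int \<Delta> * (Cm * (n * q ^ N))"
          using bound1[OF j, of N l] \<Delta>(1) by (simp add: norm_mult mult_left_mono)
      qed
      also have "\<dots> \<le> S2 * (of_int \<Delta> * (Cm * (n * q ^ N)))"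
        using S2ge[OF t] \<Delta>(1) Cm0 qN0 by (intro mult_right_mono) auto
      also have "\<dots> = K * q ^ N" by (simp add: K_def mult_ac)
      finally have "\<bar>real_of_int (w t)\<bar> < 1" using KN by simp
      then show ?thesis by linarith
    qed
    have "of_int \<Delta> * coeff (P N) l = (\<Sum>k=1..m. of_int (w k) * \<omega> k)"
      unfolding w_def by (rule intcoords[OF l])
    also have "\<dots> = (\<Sum>k=1..m. 0)" by (intro sum.cong refl) (simp add: w0)
    finally have "of_int \<Delta> * coeff (P N) l = 0" by simp
    then show ?thesis using \<Delta>(1) by simp
  qed
  have "P N = 0"
  proof (rule poly_eqI)
    fix l show "coeff (P N) l = coeff 0 l"
      using coeff0[of l] Pdeg[of N] by (cases "l < n") (auto intro: coeff_eq_0)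
  qed
  then have "\<alpha> ^ N = 0" using Pval[of N] by simp
  then have a0: "\<alpha> = 0" by simp
  (* now f has the root 0, contradicting irreducibility *)
  obtain a t where ft: "f = pCons a t" by (cases f)
  have "a = 0" using root a0 ft by simp
  then have ft': "f = [:0, 1:] * t" using ft by simp
  have tM: "poly_over M t" using fM ft by (simp add: poly_over_def) (metis coeff_pCons_Suc)
  have t0: "t \<noteq> 0" using ft' f0 by auto
  have "degree f = 1 + degree t" using ft' t0 by (simp add: degree_mult_eq)
  then have "degree t \<noteq> 0" using deg n2 by simp
  moreover have "poly_over M [:0, 1:]" using po_pCons[OF R sf0[OF M] po_const[OF R sf1[OF M]]] by simp
  ultimately show False
    using irr[unfolded irreducible_over_def, THEN conjunct2, THEN conjunct2, rule_format, OF _ tM ft']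
    by simp
qed

theorem theorem2:
  fixes M :: "complex set" and m n :: nat
    and \<omega> :: "nat \<Rightarrow> complex" and \<sigma> :: "nat \<Rightarrow> complex \<Rightarrow> complex"
    and f :: "complex poly" and \<alpha> :: complex
    and r :: "nat \<Rightarrow> nat \<Rightarrow> complex"
    and Sinv :: "nat \<Rightarrow> nat \<Rightarrow> complex"
    and \<mu> X Y :: complex and x y :: "nat \<Rightarrow> int"
    and chji :: "nat \<Rightarrow> nat \<Rightarrow> nat \<Rightarrow> real" and chi :: "nat \<Rightarrow> nat \<Rightarrow> real"
    and d :: "nat \<Rightarrow> nat \<Rightarrow> real"
    and c1 c2 c3 c4 c5 A :: real
  assumes M_field: "subfield_C M"
    and basis: "integral_basis M m \<omega>"
    and emb: "all_embeddings M m \<sigma>"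
    and f_monic: "lead_coeff f = 1" and f_irr: "irreducible_over M f"
    and f_deg: "degree f = n"
    and f_root: "poly f \<alpha> = 0"
    and \<alpha>_int: "algebraic_int \<alpha>"
    and roots: "\<And>j. j \<in> {1..m} \<Longrightarrow> map_poly (\<sigma> j) f = (\<Prod>k=1..n. [:- r j k, 1:])"
    and Sinv_left: "\<And>i k. i \<in> {1..m} \<Longrightarrow> k \<in> {1..m} \<Longrightarrow>
          (\<Sum>j=1..m. Sinv i j * \<sigma> j (\<omega> k)) = (if i = k then 1 else 0)"
    and Sinv_right: "\<And>i k. i \<in> {1..m} \<Longrightarrow> k \<in> {1..m} \<Longrightarrow>
          (\<Sum>j=1..m. \<sigma> i (\<omega> j) * Sinv j k) = (if i = k then 1 else 0)"
    and \<mu>_int: "\<mu> \<in> ring_of_integers M" and \<mu>_nz: "\<mu> \<noteq> 0"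
    and chji_def: "\<And>h j i. chji h j i = cmod (r h j - r h i) / 2"
    and chi_def: "\<And>h i. chi h i = cmod (\<sigma> h \<mu>) / (\<Prod>j\<in>{1..n} - {i}. chji h j i)"
    and c1_def: "c1 = Max {root n (cmod (\<sigma> h \<mu>)) / chji h j i | h j i.
                     h \<in> {1..m} \<and> i \<in> {1..n} \<and> j \<in> {1..n} \<and> i \<noteq> j}"
    and c2_def: "c2 = Max ((\<lambda>i. \<Sum>j=1..m. cmod (Sinv i j)) ` {1..m})"
    and c3_def: "c3 = root n (house_M m \<sigma> \<mu>) / Max {cmod (r j k) | j k. j \<in> {1..m} \<and> k \<in> {1..n}}"
    and c4_def: "c4 = max c1 c3"
    and c5_def: "c5 = 2 * c2 * Max {cmod (r j k) | j k. j \<in> {1..m} \<and> k \<in> {1..n}}"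
    and d_def: "\<And>h i. d h i = chi h i * c5 ^ (n - 1)"
    and X_repr: "X = (\<Sum>k=1..m. of_int (x k) * \<omega> k)"
    and Y_repr: "Y = (\<Sum>k=1..m. of_int (y k) * \<omega> k)"
    and norm_eq: "rel_norm_lin f X Y = \<mu>"
    and Y_big: "house_M m \<sigma> Y > c4"
    and A_def: "A = max (Max ((\<lambda>k. real_of_int \<bar>x k\<bar>) ` {1..m}))
                        (Max ((\<lambda>k. real_of_int \<bar>y k\<bar>) ` {1..m}))"
  shows "\<exists>h\<in>{1..m}. \<exists>i\<in>{1..n}. cmod (\<sigma> h X - r h i * \<sigma> h Y) \<le> d h i / A ^ (n - 1)"
proof -
  have emb_all: "\<And>j. j \<in> {1..m} \<Longrightarrow> field_emb M (\<sigma> j)" using emb unfolding all_embeddings_def by blast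
  have R: "sring M" using sring_M[OF M_field] .
  have fM: "poly_over M f" and f0: "f \<noteq> 0" and fdeg1: "degree f \<ge> 1"
    using f_irr by (auto simp: irreducible_over_def)
  have n1: "n \<ge> 1" using fdeg1 f_deg by simp
  have om: "\<And>k. k \<in> {1..m} \<Longrightarrow> \<omega> k \<in> M" using omega_in_M[OF basis] .
  have m1: "m \<ge> 1"
  proof (rule ccontr)
    assume "\<not> m \<ge> 1"
    then have m0: "m = 0" by simp
    have "M = {(\<Sum>k=1..m. of_rat (q k) * \<omega> k) | q. True}"
      using basis[unfolded integral_basis_def, THEN conjunct2, THEN conjunct1] .
    then have "M = {0}" using m0 by simp
    then show False using sf1[OF M_field] by simp
  qed
  have XM: "X \<in> M" unfolding X_repr by (rule intcomb_in_M[OF M_field om])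
  have YM: "Y \<in> M" unfolding Y_repr by (rule intcomb_in_M[OF M_field om])
  have \<mu>M: "\<mu> \<in> M" using \<mu>_int by (simp add: ring_of_integers_def)
  have house_ge: "cmod (\<sigma> j \<gamma>) \<le> house_M m \<sigma> \<gamma>" if "j \<in> {1..m}" for j \<gamma>
    unfolding house_M_def using that by (intro Max_ge) auto
  have house_in: "\<exists>j\<in>{1..m}. house_M m \<sigma> \<gamma> = cmod (\<sigma> j \<gamma>)" for \<gamma>
  proof -
    have "house_M m \<sigma> \<gamma> \<in> (\<lambda>j. cmod (\<sigma> j \<gamma>)) ` {1..m}" unfolding house_M_def
      using m1 by (intro Max_in) auto
    then show ?thesis by auto
  qed
  have house0: "house_M m \<sigma> \<gamma> \<ge> 0" for \<gamma>
  proof -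
    have "cmod (\<sigma> 1 \<gamma>) \<le> house_M m \<sigma> \<gamma>" using house_ge[of 1 \<gamma>] m1 by auto
    then show ?thesis by (rule order_trans[OF norm_ge_zero])
  qed
  define H where "H = Max {cmod (r j k) | j k. j \<in> {1..m} \<and> k \<in> {1..n}}"
  have Hset: "{cmod (r j k) | j k. j \<in> {1..m} \<and> k \<in> {1..n}} = (\<lambda>(j,k). cmod (r j k)) ` ({1..m} \<times> {1..n})"
    by (auto; blast)
  have rH: "cmod (r j k) \<le> H" if "j \<in> {1..m}" "k \<in> {1..n}" for j k
    unfolding H_def Hset using that by (intro Max_ge) force+
  have H0: "H \<ge> 0"
  proof -
    have "cmod (r 1 1) \<le> H" using rH[of 1 1] m1 n1 by auto
    then show ?thesis by (rule order_trans[OF norm_ge_zero])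
  qed
  have c3eq: "c3 = root n (house_M m \<sigma> \<mu>) / H" using c3_def H_def by simp
  have c50: "c5 = 2 * c2 * H" using c5_def H_def by simp
  have c30: "c3 \<ge> 0" unfolding c3eq using house0 H0 by (simp add: real_root_ge_zero)
  have Ybig: "house_M m \<sigma> Y > c3" using Y_big c4_def by simp
  obtain h where h: "h \<in> {1..m}" "house_M m \<sigma> Y = cmod (\<sigma> h Y)" using house_in by blast
  have "\<sigma> h Y \<noteq> 0" using h Ybig c30 by auto
  then have Y0: "Y \<noteq> 0" using emb0[OF M_field emb_all[OF h(1)]] by auto
  have sY0: "\<sigma> j Y \<noteq> 0" if "j \<in> {1..m}" for j using emb_nz[OF M_field emb_all[OF that] YM Y0] .
  have coeffM: "coeff f i \<in> M" for i using fM by (simp add: po_coeff)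
  have \<mu>eq: "\<mu> = (\<Sum>i\<le>n. coeff f i * X ^ i * Y ^ (n - i))"
    using norm_eq norm_hom[OF f_monic Y0, of X] hom_eval[OF Y0, of f n X] f_deg by simp
  have normj: "\<sigma> j \<mu> = (\<Prod>k=1..n. (\<sigma> j X - r j k * \<sigma> j Y))" if j: "j \<in> {1..m}" for j
  proof -
    note s = emb_all[OF j]
    have "\<sigma> j \<mu> = (\<Sum>i\<le>n. \<sigma> j (coeff f i * X ^ i * Y ^ (n - i)))"
      unfolding \<mu>eq by (rule emb_sum[OF M_field s]) (simp add: sf_mult[OF M_field] sf_power[OF M_field] coeffM XM YM)
    also have "\<dots> = (\<Sum>i\<le>n. coeff (map_poly (\<sigma> j) f) i * \<sigma> j X ^ i * \<sigma> j Y ^ (n - i))"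
      by (intro sum.cong refl) (simp add: emb_mult[OF M_field s] sf_mult[OF M_field] sf_power[OF M_field]
          coeffM XM YM emb_power[OF M_field s] mp_coeff[OF M_field s])
    also have "\<dots> = \<sigma> j Y ^ n * poly (map_poly (\<sigma> j) f) (\<sigma> j X / \<sigma> j Y)"
      using hom_eval[OF sY0[OF j], of "map_poly (\<sigma> j) f" n "\<sigma> j X"] map_poly_degree_leq[of "\<sigma> j" f] f_deg
      by simp
    also have "\<dots> = (\<Prod>k=1..n. (\<sigma> j X - r j k * \<sigma> j Y))"
      unfolding roots[OF j] by (rule prod_linear_eval[OF sY0[OF j]])
    finally show ?thesis .
  qed
  define \<beta> where "\<beta> k = \<sigma> h X - r h k * \<sigma> h Y" for k
  define Yh where "Yh = cmod (\<sigma> h Y)"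
  have Yh0: "Yh > 0" using sY0[OF h(1)] by (simp add: Yh_def)
  have fin\<beta>: "finite ((\<lambda>k. cmod (\<beta> k)) ` {1..n})" and ne\<beta>: "(\<lambda>k. cmod (\<beta> k)) ` {1..n} \<noteq> {}"
    using n1 by auto
  obtain i where i: "i \<in> {1..n}" "cmod (\<beta> i) = Min ((\<lambda>k. cmod (\<beta> k)) ` {1..n})"
    using Min_in[OF fin\<beta> ne\<beta>] by auto
  have imin: "cmod (\<beta> i) \<le> cmod (\<beta> k)" if "k \<in> {1..n}" for k
    using i(2) Min_le[OF fin\<beta>] that by auto
  have lower: "chji h j i * Yh \<le> cmod (\<beta> j)" if j: "j \<in> {1..n}" for j
  proof -
    have "\<beta> j - \<beta> i = (r h i - r h j) * \<sigma> h Y" by (simp add: \<beta>_def algebra_simps)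
    then have "cmod (\<beta> j - \<beta> i) = 2 * chji h j i * Yh"
      by (simp add: chji_def Yh_def norm_mult norm_minus_commute)
    moreover have "cmod (\<beta> j - \<beta> i) \<le> cmod (\<beta> j) + cmod (\<beta> i)" by (rule norm_triangle_ineq4)
    ultimately show ?thesis using imin[OF j] by simp
  qed
  have chpos: "chji h j i > 0" if "j \<in> {1..n} - {i}" for j
  proof -
    have "r h j \<noteq> r h i" using roots_distinct[OF M_field f_irr emb_all[OF h(1)] roots[OF h(1)]] that i(1) by auto
    then show ?thesis by (simp add: chji_def)
  qed
  define Pc where "Pc = (\<Prod>j\<in>{1..n} - {i}. chji h j i)"
  have Pc0: "Pc > 0" unfolding Pc_def using chpos by (intro prod_pos) auto
  have "cmod (\<sigma> h \<mu>) = (\<Prod>k=1..n. cmod (\<beta> k))" unfolding normj[OF h(1)] \<beta>_def by (simp add: prod_norm)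
  also have "\<dots> = cmod (\<beta> i) * (\<Prod>k\<in>{1..n} - {i}. cmod (\<beta> k))"
    using prod.remove[of "{1..n}" i "\<lambda>k. cmod (\<beta> k)"] i(1) by simp
  finally have \<mu>split: "cmod (\<sigma> h \<mu>) = cmod (\<beta> i) * (\<Prod>k\<in>{1..n} - {i}. cmod (\<beta> k))" .
  have "(\<Prod>k\<in>{1..n} - {i}. chji h k i * Yh) \<le> (\<Prod>k\<in>{1..n} - {i}. cmod (\<beta> k))"
    using lower chpos Yh0 by (intro prod_mono) (auto intro: less_imp_le)
  moreover have "(\<Prod>k\<in>{1..n} - {i}. chji h k i * Yh) = Pc * Yh ^ (n - 1)"
    using i(1) by (simp add: prod.distrib Pc_def)
  ultimately have "cmod (\<beta> i) * (Pc * Yh ^ (n - 1)) \<le> cmod (\<sigma> h \<mu>)"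
    unfolding \<mu>split by (intro mult_left_mono) auto
  moreover have ppos: "Pc * Yh ^ (n - 1) > 0" using Pc0 Yh0 by simp
  ultimately have "cmod (\<beta> i) \<le> cmod (\<sigma> h \<mu>) / (Pc * Yh ^ (n - 1))"
    by (simp add: pos_le_divide_eq)
  moreover have chiPc: "chi h i = cmod (\<sigma> h \<mu>) / Pc" by (simp add: chi_def Pc_def)
  ultimately have bi: "cmod (\<beta> i) \<le> chi h i / Yh ^ (n - 1)"
    by (simp add: divide_divide_eq_left)
  have chi0: "chi h i \<ge> 0" using Pc0 chiPc by simp
  show ?thesis
  proof (cases "n = 1")
    case True
    then show ?thesis using bi h(1) i(1) by (intro bexI[of _ h] bexI[of _ i]) (auto simp: d_def \<beta>_def)
  next
    case False
    then have n2: "n \<ge> 2" using n1 by simp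
    obtain j0 k0 where jk0: "j0 \<in> {1..m}" "k0 \<in> {1..n}" "cmod (r j0 k0) \<ge> 1"
      using alpha_house_ge1[OF M_field basis emb_all f_irr f_monic f_deg n2 f_root \<alpha>_int roots Sinv_left m1] by blast
    have H1: "H \<ge> 1" using rH[OF jk0(1,2)] jk0(3) by simp
    have c2ge: "(\<Sum>j=1..m. cmod (Sinv t j)) \<le> c2" if "t \<in> {1..m}" for t
      unfolding c2_def using that by (intro Max_ge) auto
    have c20: "c2 \<ge> 0" using c2ge[of 1] m1 sum_nonneg[of "{1..m}" "\<lambda>j. cmod (Sinv 1 j)"]
      by (meson atLeastAtMost_iff le_refl norm_ge_zero order_trans)
    define hY where "hY = house_M m \<sigma> Y"
    have hY0: "hY > 0" using h(2) Yh0 by (simp add: hY_def Yh_def)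
    have Xbound: "cmod (\<sigma> j X) \<le> 2 * H * hY" if j: "j \<in> {1..m}" for j
    proof -
      define \<gamma> where "\<gamma> k = \<sigma> j X - r j k * \<sigma> j Y" for k
      have fin\<gamma>: "finite ((\<lambda>k. cmod (\<gamma> k)) ` {1..n})" and ne\<gamma>: "(\<lambda>k. cmod (\<gamma> k)) ` {1..n} \<noteq> {}"
        using n1 by auto
      obtain k0 where k0: "k0 \<in> {1..n}" "cmod (\<gamma> k0) = Min ((\<lambda>k. cmod (\<gamma> k)) ` {1..n})"
        using Min_in[OF fin\<gamma> ne\<gamma>] by auto
      have kmin: "cmod (\<gamma> k0) \<le> cmod (\<gamma> k)" if "k \<in> {1..n}" for k
        using k0(2) Min_le[OF fin\<gamma>] that by auto
      have "cmod (\<gamma> k0) ^ n = (\<Prod>k=1..n. cmod (\<gamma> k0))" by simp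
      also have "\<dots> \<le> (\<Prod>k=1..n. cmod (\<gamma> k))" using kmin by (intro prod_mono) auto
      also have "\<dots> = cmod (\<sigma> j \<mu>)" unfolding normj[OF j] \<gamma>_def by (simp add: prod_norm)
      also have "\<dots> \<le> house_M m \<sigma> \<mu>" using house_ge[OF j] .
      finally have "cmod (\<gamma> k0) ^ n \<le> house_M m \<sigma> \<mu>" .
      then have "root n (cmod (\<gamma> k0) ^ n) \<le> root n (house_M m \<sigma> \<mu>)" using n1 by simp
      then have g1: "cmod (\<gamma> k0) \<le> root n (house_M m \<sigma> \<mu>)" using n1 by (simp add: real_root_power_cancel)
      have Hpos: "H > 0" using H1 by simp
      have "root n (house_M m \<sigma> \<mu>) = c3 * H" using Hpos by (simp add: c3eq)
      also have "\<dots> \<le> hY * H" using Ybig Hpos by (simp add: hY_def)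
      finally have g2: "cmod (\<gamma> k0) \<le> H * hY" using g1 by (simp add: mult.commute)
      have "\<sigma> j X = \<gamma> k0 + r j k0 * \<sigma> j Y" by (simp add: \<gamma>_def)
      then have "cmod (\<sigma> j X) \<le> cmod (\<gamma> k0) + cmod (r j k0) * cmod (\<sigma> j Y)"
        by (metis norm_mult norm_triangle_ineq)
      also have "cmod (r j k0) * cmod (\<sigma> j Y) \<le> H * hY"
        using rH[OF j k0(1)] house_ge[OF j, of Y] H0 by (intro mult_mono) (auto simp: hY_def)
      finally show ?thesis using g2 by simp
    qed
    have xb: "\<bar>real_of_int (x t)\<bar> \<le> c5 * hY" if t: "t \<in> {1..m}" for t
    proof -
      have "of_int (x t) = (\<Sum>j=1..m. Sinv t j * \<sigma> j X)"
        unfolding X_repr using coord_formula[OF M_field emb_all om Sinv_left t] by simp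
      then have "cmod (of_int (x t)) \<le> (\<Sum>j=1..m. cmod (Sinv t j)) * (2 * H * hY)"
        using coord_bound[of m "\<lambda>j. \<sigma> j X" "2 * H * hY" Sinv t] Xbound by simp
      also have "\<dots> \<le> c2 * (2 * H * hY)" using c2ge[OF t] H0 hY0 by (intro mult_right_mono) auto
      finally show ?thesis by (simp add: c50 mult_ac)
    qed
    have yb: "\<bar>real_of_int (y t)\<bar> \<le> c5 * hY" if t: "t \<in> {1..m}" for t
    proof -
      have "of_int (y t) = (\<Sum>j=1..m. Sinv t j * \<sigma> j Y)"
        unfolding Y_repr using coord_formula[OF M_field emb_all om Sinv_left t] by simp
      then have "cmod (of_int (y t)) \<le> (\<Sum>j=1..m. cmod (Sinv t j)) * hY"
        using coord_bound[of m "\<lambda>j. \<sigma> j Y" hY Sinv t] house_ge by (simp add: hY_def)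
      also have "\<dots> \<le> c2 * hY" using c2ge[OF t] hY0 by (intro mult_right_mono) auto
      also have "\<dots> \<le> c2 * (2 * H) * hY"
      proof -
        have "c2 * 1 \<le> c2 * (2 * H)" using c20 H1 by (intro mult_left_mono) auto
        then show ?thesis using hY0 by (intro mult_right_mono) auto
      qed
      finally show ?thesis by (simp add: c50 mult_ac)
    qed
    have finx: "finite ((\<lambda>k. real_of_int \<bar>x k\<bar>) ` {1..m})" and nex: "(\<lambda>k. real_of_int \<bar>x k\<bar>) ` {1..m} \<noteq> {}"
      using m1 by auto
    have finy: "finite ((\<lambda>k. real_of_int \<bar>y k\<bar>) ` {1..m})" and ney: "(\<lambda>k. real_of_int \<bar>y k\<bar>) ` {1..m} \<noteq> {}"
      using m1 by auto
    have "Max ((\<lambda>k. real_of_int \<bar>x k\<bar>) ` {1..m}) \<le> c5 * hY"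
      using xb by (subst Max_le_iff[OF finx nex]) auto
    moreover have "Max ((\<lambda>k. real_of_int \<bar>y k\<bar>) ` {1..m}) \<le> c5 * hY"
      using yb by (subst Max_le_iff[OF finy ney]) auto
    ultimately have Ale: "A \<le> c5 * hY" unfolding A_def by simp
    have Ay: "real_of_int \<bar>y t\<bar> \<le> A" if "t \<in> {1..m}" for t
      unfolding A_def using that by (intro max.coboundedI2 Max_ge[OF finy]) auto
    have Apos: "A > 0"
    proof (rule ccontr)
      assume "\<not> A > 0"
      then have "y t = 0" if "t \<in> {1..m}" for t using Ay[OF that] by simp
      then have "Y = 0" unfolding Y_repr by simp
      then show False using Y0 by simp
    qed
    have c5pos: "c5 > 0" using Ale Apos hY0 by (metis mult_pos_pos zero_less_mult_pos2 less_le_trans)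
    have hYeq: "hY = Yh" using h(2) by (simp add: hY_def Yh_def)
    have "A ^ (n - 1) \<le> (c5 * Yh) ^ (n - 1)" using Ale Apos hYeq by (intro power_mono) auto
    then have Apow: "A ^ (n - 1) \<le> c5 ^ (n - 1) * Yh ^ (n - 1)" by (simp add: power_mult_distrib)
    have "chi h i / Yh ^ (n - 1) = chi h i * c5 ^ (n - 1) / (c5 ^ (n - 1) * Yh ^ (n - 1))"
      using c5pos by simp
    also have "\<dots> \<le> chi h i * c5 ^ (n - 1) / A ^ (n - 1)"
      using Apow Apos chi0 c5pos Yh0 by (intro divide_left_mono) auto
    finally have "cmod (\<beta> i) \<le> d h i / A ^ (n - 1)" using bi by (simp add: d_def)
    then show ?thesis using h(1) i(1) by (intro bexI[of _ h] bexI[of _ i]) (auto simp: \<beta>_def)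
  qed
qed

end
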